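(* Let $t\in\mathbb{N}_{>0}$ be a time parameter. (1) There exists a deterministic neural timer network with time parameter $t$ that uses $O(\log t)$ deterministic threshold gates. (2) Every deterministic neural timer network with time parameter $t$ requires $\Omega(\log t)$ neurons.
   Context: A neural network consists of input neurons (no incoming edges), output neurons and auxiliary neurons, connected by directed weighted edges with weights $w(u,v)\in\mathbb{R}$ ($w(u,v)=0$ means no edge; self-loops are allowed); every neuron $v$ has a threshold $b(v)\ge 0$, and every neuron is either excitatory (all outgoing weights $\ge 0$) or inhibitory (all outgoing weights $\le 0$). The network evolves in discrete synchronous rounds; $u^\tau\in\{0,1\}$ indicates whether $u$ fires in round $\tau$, the firing of input neurons is given externally, and for a non-input neuron $u$ the potential is $\mathrm{pot}(u,\tau)=\sum_v w(v,u)\,v^{\tau-1}-b(u)$. A deterministic threshold gate fires in round $\tau$ iff $\mathrm{pot}(u,\tau)\ge 0$. Neurons have no memory beyond this rule. The size of a network is measured by its number of auxiliary neurons. A deterministic neural timer with time parameter $t$ is a network of deterministic threshold gates with one input neuron $x$, one output neuron $y$ and auxiliary neurons, such that in every round $\tau$, $y^\tau=1$ iff there exists a round $\tau'$ with $\tau-t\le\tau'<\tau$ and $x^{\tau'}=1$. *)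

theory Defs
  imports Complex_Main
begin

text \<open>Neurons are identified by natural numbers; the network
consists of the finite set of neurons \<open>nodes\<close>, a distinguished input
neuron, a distinguished output neuron (all other neurons are auxiliary),
edge weights \<open>wt u v\<close> (weight of the edge from u to v, 0 = no edge,
self loops allowed) and thresholds \<open>thr\<close>.\<close>

record net =
  nodes :: "nat set"
  inp :: nat
  outp :: nat
  wt :: "nat \<Rightarrow> nat \<Rightarrow> real"
  thr :: "nat \<Rightarrow> real"

definition valid_net :: "net \<Rightarrow> bool" where
  "valid_net N \<longleftrightarrow>
     finite (nodes N) \<and> inp N \<in> nodes N \<and> outp N \<in> nodes N \<and> inp N \<noteq> outp N \<and>
     (\<forall>u v. (u \<notin> nodes N \<or> v \<notin> nodes N) \<longrightarrow> wt N u v = 0) \<and>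
     (\<forall>u. wt N u (inp N) = 0) \<and>
     (\<forall>v \<in> nodes N. thr N v \<ge> 0) \<and>
     (\<forall>u \<in> nodes N. (\<forall>v. wt N u v \<ge> 0) \<or> (\<forall>v. wt N u v \<le> 0))"

text \<open>Number of auxiliary neurons (the size of the network).\<close>
definition aux_count :: "net \<Rightarrow> nat" where
  "aux_count N = card (nodes N - {inp N, outp N})"

fun fires :: "net \<Rightarrow> (nat \<Rightarrow> bool) \<Rightarrow> nat \<Rightarrow> nat \<Rightarrow> bool" where
  "fires N X 0 v = (v = inp N \<and> X 0)"
| "fires N X (Suc \<tau>) v =
     (if v = inp N then X (Suc \<tau>)
      else v \<in> nodes N \<and>
           (\<Sum>u\<in>nodes N. wt N u v * (if fires N X \<tau> u then 1 else 0)) - thr N v \<ge> 0)"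

definition is_det_timer :: "net \<Rightarrow> nat \<Rightarrow> bool" where
  "is_det_timer N t \<longleftrightarrow> valid_net N \<and>
     (\<forall>X \<tau>. fires N X \<tau> (outp N) \<longleftrightarrow> (\<exists>\<tau>'. \<tau> \<le> \<tau>' + t \<and> \<tau>' < \<tau> \<and> X \<tau>'))"

end

theory Submission imports Defs "HOL-Library.Countable" begin

datatype nm = NX | NY | ND | NR | NG | NB nat | NBN nat | NBT nat | NZ nat | NW nat
instance nm :: countable by countable_datatype

definition Names :: "nat \<Rightarrow> nm set" where
"Names k = {NX,NY,ND,NR,NG} \<union> NB ` {..<k} \<union> NBN ` {..<k} \<union> NBT ` {..<k} \<union> NZ ` {..k} \<union> NW ` {..<k}"

definition bw :: "nat \<Rightarrow> nat \<Rightarrow> nat \<Rightarrow> nm \<Rightarrow> real" where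
"bw k v0 i a = (case a of NBT j \<Rightarrow> if j = i then 1 else 0
   | NZ j \<Rightarrow> if j = i then 1 else if j = k then -2 else 0
   | NW j \<Rightarrow> if j = i then -2 else 0
   | NG \<Rightarrow> if odd (v0 div 2^i) then 1 else 0
   | NR \<Rightarrow> -4 | _ \<Rightarrow> 0)"

definition Wn :: "nat \<Rightarrow> nat \<Rightarrow> nat \<Rightarrow> nm \<Rightarrow> nm \<Rightarrow> real" where
"Wn k v0 p a b = (case b of
   NY \<Rightarrow> (case a of NX \<Rightarrow> 1 | ND \<Rightarrow> 1 | NG \<Rightarrow> 1 | NB i \<Rightarrow> 1 | NBT i \<Rightarrow> if p \<le> i then 1 else 0 | _ \<Rightarrow> 0)
 | ND \<Rightarrow> (if a = NX then 1 else 0)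
 | NR \<Rightarrow> (if a = NX then 1 else 0)
 | NG \<Rightarrow> (if a = ND then 1 else 0)
 | NB i \<Rightarrow> bw k v0 i a
 | NBN i \<Rightarrow> bw k v0 i a
 | NBT i \<Rightarrow> (if a = NB i then 1 else if a = NR then -4 else 0)
 | NZ i \<Rightarrow> (case a of NBN j \<Rightarrow> if j < i then -1 else 0 | NR \<Rightarrow> -4 | _ \<Rightarrow> 0)
 | NW i \<Rightarrow> (case a of NB j \<Rightarrow> if j = i then 1 else 0 | NBN j \<Rightarrow> if j < i then -1 else 0 | NR \<Rightarrow> -4 | _ \<Rightarrow> 0)
 | NX \<Rightarrow> 0)"

definition Th :: "nm \<Rightarrow> real" where
"Th b = (case b of NZ i \<Rightarrow> 0 | NX \<Rightarrow> 0 | _ \<Rightarrow> 1)"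

definition mk :: "nat \<Rightarrow> nat \<Rightarrow> nat \<Rightarrow> net" where
"mk k v0 p = \<lparr>nodes = to_nat ` Names k, inp = to_nat NX, outp = to_nat NY,
   wt = (\<lambda>u v. if u \<in> to_nat ` Names k \<and> v \<in> to_nat ` Names k
               then Wn k v0 p (from_nat u) (from_nat v) else 0),
   thr = (\<lambda>v. Th (from_nat v))\<rparr>"

definition F :: "nat \<Rightarrow> nat \<Rightarrow> nat \<Rightarrow> (nat \<Rightarrow> bool) \<Rightarrow> nat \<Rightarrow> nm \<Rightarrow> bool" where
"F k v0 p X \<tau> b = fires (mk k v0 p) X \<tau> (to_nat b)"

definition ind :: "bool \<Rightarrow> real" where "ind b = (if b then 1 else 0)"

lemma finite_Names: "finite (Names k)"
  by (simp add: Names_def)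

lemma F_X: "F k v0 p X \<tau> NX = X \<tau>"
  by (cases \<tau>) (simp_all add: F_def mk_def)

lemma F_0: "b \<noteq> NX \<Longrightarrow> \<not> F k v0 p X 0 b"
  by (simp add: F_def mk_def)

lemma F_step:
  assumes "b \<in> Names k" "b \<noteq> NX"
  shows "F k v0 p X (Suc \<tau>) b \<longleftrightarrow>
     (\<Sum>a\<in>Names k. Wn k v0 p a b * ind (F k v0 p X \<tau> a)) \<ge> Th b"
proof -
  have inj: "inj_on to_nat (Names k)" by (meson inj_on_subset subset_UNIV inj_to_nat)
  have "(\<Sum>u\<in>to_nat ` Names k. wt (mk k v0 p) u (to_nat b) * (if fires (mk k v0 p) X \<tau> u then 1 else 0))
     = (\<Sum>a\<in>Names k. Wn k v0 p a b * ind (F k v0 p X \<tau> a))"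
    by (subst sum.reindex[OF inj]) (simp add: mk_def F_def ind_def assms)
  then show ?thesis using assms
    by (simp add: F_def mk_def)
qed


lemma sum01:
  assumes "finite A" "\<forall>a\<in>A. c a = 0 \<or> c a = 1"
  shows "(1 \<le> (\<Sum>a\<in>A. c a * ind (P a))) \<longleftrightarrow> (\<exists>a\<in>A. c a = 1 \<and> P a)"
proof
  assume "\<exists>a\<in>A. c a = 1 \<and> P a"
  then obtain a where a: "a \<in> A" "c a = 1" "P a" by blast
  have "c a * ind (P a) \<le> (\<Sum>a\<in>A. c a * ind (P a))"
    by (rule member_le_sum) (use assms a in \<open>auto simp: ind_def\<close>)
  then show "1 \<le> (\<Sum>a\<in>A. c a * ind (P a))" using a by (simp add: ind_def)
next
  assume h: "1 \<le> (\<Sum>a\<in>A. c a * ind (P a))"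
  show "\<exists>a\<in>A. c a = 1 \<and> P a"
  proof (rule ccontr)
    assume "\<not> ?thesis"
    then have "(\<Sum>a\<in>A. c a * ind (P a)) = 0"
      using assms by (intro sum.neutral) (fastforce simp: ind_def)
    then show False using h by simp
  qed
qed

lemma bd: "(\<forall>j<i. \<not> odd ((v::nat) div 2^j)) \<longleftrightarrow> 2^i dvd v"
proof (induction i)
  case 0 then show ?case by simp
next
  case (Suc i)
  have "(\<forall>j<Suc i. \<not> odd (v div 2^j)) \<longleftrightarrow> 2^i dvd v \<and> even (v div 2^i)"
    using Suc by (auto simp: less_Suc_eq)
  also have "\<dots> \<longleftrightarrow> 2^Suc i dvd v"
    by auto
  finally show ?case .
qed

lemma divq: "(r::nat) < d \<Longrightarrow> (d * q + r) div d = q"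
  by simp

lemma dec: assumes "(v::nat) > 0" shows "odd ((v-1) div 2^i) \<longleftrightarrow> (odd (v div 2^i) \<noteq> (2^i dvd v))"
proof -
  define d :: nat where "d = 2^i"
  define q where "q = v div d"
  define r where "r = v mod d"
  have d0: "d > 0" by (simp add: d_def)
  have v: "v = d * q + r" by (simp add: q_def r_def)
  show ?thesis
  proof (cases "r > 0")
    case True
    have "v - 1 = d * q + (r - 1)" using v True by simp
    moreover have "r - 1 < d" using r_def d0 mod_less_divisor[OF d0, of v] by linarith
    ultimately have "(v-1) div d = q" using divq[of "r-1" d q] by simp
    moreover have "\<not> d dvd v" using True r_def by (simp add: dvd_eq_mod_eq_0)
    ultimately show ?thesis by (simp add: d_def q_def)
  next
    case False
    then have r0: "r = 0" by simp
    then have q0: "q > 0" using v assms by (cases q) auto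
    obtain q' where q': "q = Suc q'" using q0 by (cases q) auto
    have "v = d * q' + d" using v r0 q' by simp
    then have "v - 1 = d * (q - 1) + (d - 1)" using d0 q' by simp
    then have e1': "(v-1) div d = q'" using divq[of "d-1" d q'] d0 q' by simp
    then have e1: "(v-1) div 2^i = q'" by (simp add: d_def)
    have e2: "v div 2^i = Suc q'" using q' by (simp add: q_def d_def)
    have "2^i dvd v" using v r0 by (simp add: d_def)
    then show ?thesis using e1 e2 by simp
  qed
qed

lemma dvd_small: "(v::nat) < 2^k \<Longrightarrow> 2^k dvd v \<longleftrightarrow> v = 0"
  using nat_dvd_not_less by fastforce

lemma bits_ge:
  assumes "(v::nat) < 2^k" "p \<le> k"
  shows "(\<exists>i<k. p \<le> i \<and> odd (v div 2^i)) \<longleftrightarrow> 2^p \<le> v"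
proof
  assume "\<exists>i<k. p \<le> i \<and> odd (v div 2^i)"
  then obtain i where i: "p \<le> i" "odd (v div 2^i)" by blast
  then have "v div 2^i \<noteq> 0" by (metis odd_pos less_irrefl)
  then have "2^i \<le> v" by (simp add: div_eq_0_iff)
  moreover have "(2::nat)^p \<le> 2^i" using i by simp
  ultimately show "2^p \<le> v" by linarith
next
  assume h: "2^p \<le> v"
  show "\<exists>i<k. p \<le> i \<and> odd (v div 2^i)"
  proof (rule ccontr)
    assume "\<not> ?thesis"
    then have e: "\<forall>j<k-p. \<not> odd ((v div 2^p) div 2^j)"
      by (auto simp: div_mult2_eq[symmetric] power_add[symmetric])
    have "2^(k-p) dvd (v div 2^p)" using e bd by blast
    moreover have "v div 2^p < 2^(k-p)"
      using assms by (simp add: div_less_iff_less_mult power_add[symmetric])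
    ultimately have "v div 2^p = 0" using dvd_small by blast
    then show False using h by (simp add: div_eq_0_iff)
  qed
qed

context fixes k v0 p :: nat and X :: "nat \<Rightarrow> bool" and \<tau> :: nat
begin

abbreviation "FF \<equiv> F k v0 p X \<tau>"
abbreviation "FS \<equiv> F k v0 p X (Suc \<tau>)"

lemma step01:
  assumes "b \<in> Names k" "b \<noteq> NX" "Th b = 1" "\<forall>a\<in>Names k. Wn k v0 p a b = 0 \<or> Wn k v0 p a b = 1"
  shows "FS b \<longleftrightarrow> (\<exists>a\<in>Names k. Wn k v0 p a b = 1 \<and> FF a)"
  using F_step[OF assms(1,2)] sum01[OF finite_Names assms(4)] assms(3) by simp

lemma step_Y: "FS NY \<longleftrightarrow> FF NX \<or> FF ND \<or> FF NG \<or> (\<exists>i<k. FF (NB i)) \<or> (\<exists>i<k. p \<le> i \<and> FF (NBT i))"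
  by (subst step01) (auto simp: Names_def Wn_def Th_def split: nm.splits)

lemma step_D: "FS ND \<longleftrightarrow> FF NX"
  by (subst step01) (auto simp: Names_def Wn_def Th_def split: nm.splits)

lemma step_R: "FS NR \<longleftrightarrow> FF NX"
  by (subst step01) (auto simp: Names_def Wn_def Th_def split: nm.splits)

lemma step_G: "FS NG \<longleftrightarrow> FF ND"
  by (subst step01) (auto simp: Names_def Wn_def Th_def split: nm.splits)

lemma supp:
  assumes "b \<in> Names k" "b \<noteq> NX" "S \<subseteq> Names k" "\<forall>a\<in>Names k - S. Wn k v0 p a b = 0"
  shows "FS b \<longleftrightarrow> (\<Sum>a\<in>S. Wn k v0 p a b * ind (FF a)) \<ge> Th b"
proof -
  have "(\<Sum>a\<in>Names k. Wn k v0 p a b * ind (FF a)) = (\<Sum>a\<in>S. Wn k v0 p a b * ind (FF a))"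
    by (rule sum.mono_neutral_right) (use assms finite_Names in auto)
  then show ?thesis using F_step[OF assms(1,2)] by simp
qed

lemma step_BT: assumes "i < k" shows "FS (NBT i) \<longleftrightarrow> FF (NB i) \<and> \<not> FF NR"
proof -
  have "FS (NBT i) \<longleftrightarrow> (\<Sum>a\<in>{NB i, NR}. Wn k v0 p a (NBT i) * ind (FF a)) \<ge> Th (NBT i)"
    by (rule supp) (use assms in \<open>auto simp: Names_def Wn_def\<close>)
  then show ?thesis by (simp add: Wn_def Th_def ind_def)
qed

lemma step_Z: assumes "i \<le> k" shows "FS (NZ i) \<longleftrightarrow> \<not> FF NR \<and> (\<forall>j<i. \<not> FF (NBN j))"
proof -
  have "FS (NZ i) \<longleftrightarrow> (\<Sum>a\<in>insert NR (NBN ` {..<i}). Wn k v0 p a (NZ i) * ind (FF a)) \<ge> Th (NZ i)"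
    by (rule supp) (use assms in \<open>auto simp: Names_def Wn_def split: nm.splits\<close>)
  also have "(\<Sum>a\<in>insert NR (NBN ` {..<i}). Wn k v0 p a (NZ i) * ind (FF a))
      = -4 * ind (FF NR) - (\<Sum>j<i. ind (FF (NBN j)))"
  proof -
    have "(\<Sum>a\<in>NBN ` {..<i}. Wn k v0 p a (NZ i) * ind (FF a)) = (\<Sum>j<i. - ind (FF (NBN j)))"
      by (subst sum.reindex) (auto simp: inj_on_def Wn_def intro!: sum.cong)
    then show ?thesis by (subst sum.insert) (auto simp: Wn_def sum_negf)
  qed
  finally have e: "FS (NZ i) \<longleftrightarrow> 0 \<le> -4 * ind (FF NR) - (\<Sum>j<i. ind (FF (NBN j)))"
    by (simp add: Th_def)
  have nn: "0 \<le> (\<Sum>j<i. ind (FF (NBN j)))" by (rule sum_nonneg) (simp add: ind_def)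
  have z: "(\<Sum>j<i. ind (FF (NBN j))) = 0 \<longleftrightarrow> (\<forall>j<i. \<not> FF (NBN j))"
    by (subst sum_nonneg_eq_0_iff) (auto simp: ind_def)
  show ?thesis unfolding e using nn z by (auto simp: ind_def)
qed

lemma step_W: assumes "i < k" shows "FS (NW i) \<longleftrightarrow> \<not> FF NR \<and> FF (NB i) \<and> (\<forall>j<i. \<not> FF (NBN j))"
proof -
  have "FS (NW i) \<longleftrightarrow> (\<Sum>a\<in>insert NR (insert (NB i) (NBN ` {..<i})). Wn k v0 p a (NW i) * ind (FF a)) \<ge> Th (NW i)"
    by (rule supp) (use assms in \<open>auto simp: Names_def Wn_def split: nm.splits\<close>)
  also have "(\<Sum>a\<in>insert NR (insert (NB i) (NBN ` {..<i})). Wn k v0 p a (NW i) * ind (FF a))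
      = -4 * ind (FF NR) + ind (FF (NB i)) - (\<Sum>j<i. ind (FF (NBN j)))"
  proof -
    have "(\<Sum>a\<in>NBN ` {..<i}. Wn k v0 p a (NW i) * ind (FF a)) = (\<Sum>j<i. - ind (FF (NBN j)))"
      by (subst sum.reindex) (auto simp: inj_on_def Wn_def intro!: sum.cong)
    moreover have "NB i \<notin> NBN ` {..<i}" "NR \<notin> NBN ` {..<i}" by auto
    ultimately show ?thesis by (simp add: Wn_def sum_negf)
  qed
  finally have e: "FS (NW i) \<longleftrightarrow> 1 \<le> -4 * ind (FF NR) + ind (FF (NB i)) - (\<Sum>j<i. ind (FF (NBN j)))"
    by (simp add: Th_def)
  have nn: "0 \<le> (\<Sum>j<i. ind (FF (NBN j)))" by (rule sum_nonneg) (simp add: ind_def)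
  have z: "(\<Sum>j<i. ind (FF (NBN j))) = 0 \<longleftrightarrow> (\<forall>j<i. \<not> FF (NBN j))"
    by (subst sum_nonneg_eq_0_iff) (auto simp: ind_def)
  show ?thesis unfolding e using nn z by (auto simp: ind_def)
qed

lemma step_B0:
  assumes "i < k" "b = NB i \<or> b = NBN i"
  shows "FS b \<longleftrightarrow> 1 \<le> ind (FF (NBT i)) + ind (FF (NZ i)) - 2 * ind (FF (NW i)) - 2 * ind (FF (NZ k))
          + (if odd (v0 div 2^i) then ind (FF NG) else 0) - 4 * ind (FF NR)"
proof -
  have "FS b \<longleftrightarrow> (\<Sum>a\<in>{NBT i, NZ i, NZ k, NW i, NG, NR}. Wn k v0 p a b * ind (FF a)) \<ge> Th b"
    by (rule supp) (use assms in \<open>auto simp: Names_def Wn_def bw_def split: nm.splits\<close>)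
  then show ?thesis using assms by (auto simp: Wn_def bw_def Th_def)
qed

lemma step_B:
  assumes "i < k" "b = NB i \<or> b = NBN i"
  shows "FS b \<longleftrightarrow> \<not> FF NR \<and> 1 \<le> ind (FF (NBT i)) + ind (FF (NZ i)) - 2 * ind (FF (NW i)) - 2 * ind (FF (NZ k))
          + (if odd (v0 div 2^i) then ind (FF NG) else 0)"
  unfolding step_B0[OF assms] by (auto simp: ind_def)

end


context fixes k v0 p :: nat and X :: "nat \<Rightarrow> bool"
begin

abbreviation "G \<equiv> F k v0 p X"

lemma F_BN: "i < k \<Longrightarrow> G \<tau> (NBN i) = G \<tau> (NB i)"
proof (induction \<tau>)
  case 0 then show ?case by (simp add: F_0)
next
  case (Suc \<tau>) then show ?case using step_B[of i k "NBN i"] step_B[of i k "NB i"] by simp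
qed

definition L1 :: "nat \<Rightarrow> nat \<Rightarrow> bool" where
  "L1 v \<tau> \<longleftrightarrow> (\<forall>i<k. G \<tau> (NB i) \<longleftrightarrow> odd (v div 2^i))"

definition L2 :: "nat \<Rightarrow> nat \<Rightarrow> bool" where
  "L2 v \<tau> \<longleftrightarrow> (\<forall>i<k. (G \<tau> (NBT i) \<longleftrightarrow> odd (v div 2^i)) \<and> (G \<tau> (NW i) \<longleftrightarrow> odd (v div 2^i) \<and> 2^i dvd v))
      \<and> (\<forall>i\<le>k. G \<tau> (NZ i) \<longleftrightarrow> 2^i dvd v)"

definition Off2 :: "nat \<Rightarrow> bool" where
  "Off2 \<tau> \<longleftrightarrow> (\<forall>i<k. \<not> G \<tau> (NBT i) \<and> \<not> G \<tau> (NW i)) \<and> (\<forall>i\<le>k. \<not> G \<tau> (NZ i))"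

lemma T1: assumes "L1 v \<tau>" "\<not> G \<tau> NR" shows "L2 v (Suc \<tau>)"
proof -
  have bn: "(\<forall>j<i. \<not> G \<tau> (NBN j)) \<longleftrightarrow> 2^i dvd v" if "i \<le> k" for i
  proof -
    have "(\<forall>j<i. \<not> G \<tau> (NBN j)) \<longleftrightarrow> (\<forall>j<i. \<not> odd (v div 2^j))"
      using that assms(1) F_BN unfolding L1_def by auto
    then show ?thesis using bd[of i v] by simp
  qed
  show ?thesis unfolding L2_def
    using assms bn step_BT step_W step_Z unfolding L1_def by (auto simp del: F_def)
qed

lemma T2: assumes "L2 v \<tau>" "\<not> G \<tau> NR" "\<not> G \<tau> NG" "v < 2^k" shows "L1 (v - 1) (Suc \<tau>)"
  unfolding L1_def
proof (intro allI impI)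
  fix i assume i: "i < k"
  have e: "G (Suc \<tau>) (NB i) \<longleftrightarrow> 1 \<le> ind (odd (v div 2^i)) + ind (2^i dvd v)
      - 2 * ind (odd (v div 2^i) \<and> 2^i dvd v) - 2 * ind (v = 0)"
    using step_B[of i k "NB i" v0 p X \<tau>] assms i dvd_small[OF assms(4)] unfolding L2_def
    by (simp add: ind_def)
  show "G (Suc \<tau>) (NB i) \<longleftrightarrow> odd ((v - 1) div 2 ^ i)"
  proof (cases "v = 0")
    case True then show ?thesis using e by (simp add: ind_def)
  next
    case False then show ?thesis using e dec[of v i] by (auto simp: ind_def)
  qed
qed

lemma T3: assumes "Off2 \<tau>" "\<not> G \<tau> NR" shows "L1 (if G \<tau> NG then v0 else 0) (Suc \<tau>)"
  unfolding L1_def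
proof (intro allI impI)
  fix i assume i: "i < k"
  show "G (Suc \<tau>) (NB i) \<longleftrightarrow> odd ((if G \<tau> NG then v0 else 0) div 2 ^ i)"
    using step_B[of i k "NB i" v0 p X \<tau>] assms i unfolding Off2_def
    by (auto simp: ind_def)
qed

lemma T4: assumes "G \<tau> NR" shows "L1 0 (Suc \<tau>) \<and> Off2 (Suc \<tau>)"
  using assms step_B[of _ k _ v0 p X \<tau>] step_BT[of _ k v0 p X \<tau>] step_W[of _ k v0 p X \<tau>]
    step_Z[of _ k v0 p X \<tau>]
  unfolding L1_def Off2_def by auto

end


context fixes k v0 p :: nat and X :: "nat \<Rightarrow> bool"
begin

abbreviation "GG \<equiv> F k v0 p X"

lemma C_D: "GG (Suc \<tau>) ND = X \<tau>" using step_D[of k v0 p X \<tau>] F_X by simp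
lemma C_R: "GG (Suc \<tau>) NR = X \<tau>" using step_R[of k v0 p X \<tau>] F_X by simp
lemma C_G: "GG (Suc \<tau>) NG = GG \<tau> ND" using step_G[of k v0 p X \<tau>] by simp
lemma C_Y: "GG (Suc \<tau>) NY \<longleftrightarrow> X \<tau> \<or> GG \<tau> ND \<or> GG \<tau> NG \<or> (\<exists>i<k. GG \<tau> (NB i)) \<or> (\<exists>i<k. p \<le> i \<and> GG \<tau> (NBT i))"
  using step_Y[of k v0 p X \<tau>] F_X by simp

definition E :: "nat \<Rightarrow> nat \<Rightarrow> bool" where
  "E n \<tau> \<longleftrightarrow> \<not> GG \<tau> ND \<and> \<not> GG \<tau> NR \<and> \<not> GG \<tau> NG \<and>
     (if odd n then L1 k v0 p X (v0 - n div 2) \<tau> \<and> L2 k v0 p X 0 \<tau>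
      else L1 k v0 p X 0 \<tau> \<and> L2 k v0 p X (v0 - (n div 2 - 1)) \<tau>)"

lemma run:
  assumes v0: "v0 < 2^k" and s: "\<not> GG s ND" "\<not> GG s NR" "GG s NG" "L1 k v0 p X 0 s" "Off2 k v0 p X s"
  shows "(\<forall>i<n. \<not> X (s+i)) \<Longrightarrow> n \<ge> 1 \<Longrightarrow> E n (s+n)"
proof (induction n)
  case 0 then show ?case by simp
next
  case (Suc n)
  show ?case
  proof (cases "n = 0")
    case True
    have "L1 k v0 p X v0 (Suc s)" using T3[OF s(5) s(2)] s(3) by simp
    moreover have "L2 k v0 p X 0 (Suc s)" using T1[OF s(4) s(2)] .
    moreover have "\<not> GG (Suc s) ND" "\<not> GG (Suc s) NR" "\<not> GG (Suc s) NG"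
      using Suc.prems s(1) by (auto simp: C_D C_R C_G)
    ultimately show ?thesis using True by (simp add: E_def)
  next
    case False
    then have IH: "E n (s+n)" using Suc by auto
    have xn: "\<not> X (s+n)" using Suc.prems by auto
    have c: "\<not> GG (Suc (s+n)) ND" "\<not> GG (Suc (s+n)) NR" "\<not> GG (Suc (s+n)) NG"
      using xn IH by (auto simp: C_D C_R C_G E_def)
    have r: "\<not> GG (s+n) NR" "\<not> GG (s+n) NG" using IH by (auto simp: E_def)
    show ?thesis
    proof (cases "odd n")
      case True
      then have a: "L1 k v0 p X (v0 - n div 2) (s+n)" "L2 k v0 p X 0 (s+n)" using IH by (auto simp: E_def)
      have "L2 k v0 p X (v0 - n div 2) (Suc (s+n))" using T1[OF a(1) r(1)] .
      moreover have "L1 k v0 p X (0 - 1) (Suc (s+n))" using T2[OF a(2) r] by simp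
      moreover have "Suc n div 2 - 1 = n div 2" using True by presburger
      ultimately show ?thesis using c True by (simp add: E_def)
    next
      case ev: False
      then have a: "L1 k v0 p X 0 (s+n)" "L2 k v0 p X (v0 - (n div 2 - 1)) (s+n)" using IH by (auto simp: E_def)
      have "L2 k v0 p X 0 (Suc (s+n))" using T1[OF a(1) r(1)] .
      moreover have "L1 k v0 p X (v0 - (n div 2 - 1) - 1) (Suc (s+n))" using T2[OF a(2) r] v0 by simp
      moreover have "v0 - (n div 2 - 1) - 1 = v0 - Suc n div 2"
      proof -
        have "Suc n div 2 = n div 2" using ev by simp
        moreover have "1 \<le> n div 2" using ev False by (cases n) auto
        ultimately show ?thesis by simp
      qed
      ultimately show ?thesis using c ev by (simp add: E_def)
    qed
  qed
qed

lemma reset: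
  assumes "X t0" "\<not> X (Suc t0)"
  shows "\<not> GG (Suc (Suc t0)) ND \<and> \<not> GG (Suc (Suc t0)) NR \<and> GG (Suc (Suc t0)) NG \<and>
         L1 k v0 p X 0 (Suc (Suc t0)) \<and> Off2 k v0 p X (Suc (Suc t0))"
  using assms T4[of k v0 p X "Suc t0"] by (simp add: C_D C_R C_G)

lemma idle:
  "(\<forall>i<\<tau>. \<not> X i) \<Longrightarrow> \<not> GG \<tau> ND \<and> \<not> GG \<tau> NR \<and> \<not> GG \<tau> NG \<and> L1 k v0 p X 0 \<tau> \<and>
      (L2 k v0 p X 0 \<tau> \<or> Off2 k v0 p X \<tau>)"
proof (induction \<tau>)
  case 0 then show ?case by (simp add: F_0 L1_def Off2_def)
next
  case (Suc \<tau>)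
  then have IH: "\<not> GG \<tau> ND \<and> \<not> GG \<tau> NR \<and> \<not> GG \<tau> NG \<and> L1 k v0 p X 0 \<tau> \<and>
      (L2 k v0 p X 0 \<tau> \<or> Off2 k v0 p X \<tau>)" by simp
  have x: "\<not> X \<tau>" using Suc.prems by simp
  have "L1 k v0 p X 0 (Suc \<tau>)"
    using IH T2[of k v0 p X 0 \<tau>] T3[of k v0 p X \<tau>] by auto
  moreover have "L2 k v0 p X 0 (Suc \<tau>)" using IH T1 by blast
  ultimately show ?case using IH x by (simp add: C_D C_R C_G)
qed

end


definition pos :: "nat \<Rightarrow> nm \<Rightarrow> bool" where
  "pos k a = (case a of NR \<Rightarrow> False | NBN _ \<Rightarrow> False | NW _ \<Rightarrow> False | NZ j \<Rightarrow> j \<noteq> k | _ \<Rightarrow> True)"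

lemma sign_pos: "a \<in> Names k \<Longrightarrow> b \<in> Names k \<Longrightarrow> pos k a \<Longrightarrow> 0 \<le> Wn k v0 p a b"
  by (cases a; cases b) (auto simp: pos_def Wn_def bw_def Names_def)

lemma sign_neg: "a \<in> Names k \<Longrightarrow> b \<in> Names k \<Longrightarrow> \<not> pos k a \<Longrightarrow> Wn k v0 p a b \<le> 0"
  by (cases a; cases b) (auto simp: pos_def Wn_def bw_def Names_def)

lemma valid_mk: "valid_net (mk k v0 p)"
proof -
  have inj: "inj to_nat" by (rule inj_to_nat)
  have nx: "NX \<in> Names k" "NY \<in> Names k" by (auto simp: Names_def)
  have s: "(\<forall>v. 0 \<le> wt (mk k v0 p) u v) \<or> (\<forall>v. wt (mk k v0 p) u v \<le> 0)"
    if u: "u \<in> to_nat ` Names k" for u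
  proof -
    obtain a where a: "a \<in> Names k" "u = to_nat a" using u by blast
    show ?thesis
    proof (cases "pos k a")
      case True then show ?thesis using a sign_pos[of a k _ v0 p] by (auto simp: mk_def)
    next
      case False then show ?thesis using a sign_neg[of a k _ v0 p] by (auto simp: mk_def)
    qed
  qed
  show ?thesis unfolding valid_net_def
    using nx s by (auto simp: mk_def finite_Names Th_def Wn_def inj_eq[OF inj] split: nm.splits)
qed

lemma outp_F: "fires (mk k v0 p) X \<tau> (outp (mk k v0 p)) = F k v0 p X \<tau> NY"
  by (simp add: F_def mk_def)

lemma timer_ok:
  assumes v1: "1 \<le> v0" and v0: "v0 < 2^k" and p: "p \<le> 1" and t: "t = 2*v0 + 3 - p"
  shows "is_det_timer (mk k v0 p) t"
proof -
  have h: "fires (mk k v0 p) X \<tau> (outp (mk k v0 p)) \<longleftrightarrow> (\<exists>\<tau>'. \<tau> \<le> \<tau>' + t \<and> \<tau>' < \<tau> \<and> X \<tau>')" for X \<tau>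
  proof -
  have k1: "1 \<le> k" using v1 v0 by (cases k) auto
  have B1: "(\<exists>i<k. F k v0 p X \<sigma> (NB i)) \<longleftrightarrow> 1 \<le> v" if "L1 k v0 p X v \<sigma>" "v < 2^k" for v \<sigma>
    using that bits_ge[of v k 0] unfolding L1_def by auto
  have B2: "(\<exists>i<k. p \<le> i \<and> F k v0 p X \<sigma> (NBT i)) \<longleftrightarrow> 2^p \<le> v" if "L2 k v0 p X v \<sigma>" "v < 2^k" for v \<sigma>
    using that bits_ge[of v k p] p k1 unfolding L2_def by auto
  have B2': "\<not> (\<exists>i<k. p \<le> i \<and> F k v0 p X \<sigma> (NBT i))" if "Off2 k v0 p X \<sigma>" for \<sigma>
    using that unfolding Off2_def by auto
  have main: "F k v0 p X \<tau> NY \<longleftrightarrow> (\<exists>\<tau>'. \<tau> \<le> \<tau>' + t \<and> \<tau>' < \<tau> \<and> X \<tau>')"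
  proof (cases \<tau>)
    case 0 then show ?thesis by (simp add: F_0 mk_def inj_eq[OF inj_to_nat])
  next
    case (Suc \<sigma>)
    show ?thesis
    proof (cases "\<exists>i\<le>\<sigma>. X i")
      case False
      have I: "\<not> F k v0 p X \<sigma> ND \<and> \<not> F k v0 p X \<sigma> NR \<and> \<not> F k v0 p X \<sigma> NG \<and> L1 k v0 p X 0 \<sigma> \<and>
          (L2 k v0 p X 0 \<sigma> \<or> Off2 k v0 p X \<sigma>)"
        using idle[where X=X and \<tau>=\<sigma>] False by auto
      have "\<not> F k v0 p X \<tau> NY"
        using I B1[of 0 \<sigma>] B2[of 0 \<sigma>] B2'[of \<sigma>] False unfolding Suc C_Y by auto
      moreover have "\<not> (\<exists>\<tau>'. \<tau> \<le> \<tau>' + t \<and> \<tau>' < \<tau> \<and> X \<tau>')" using False Suc by auto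
      ultimately show ?thesis by blast
    next
      case True
      define M where "M = Max {i. i \<le> \<sigma> \<and> X i}"
      have fin: "finite {i. i \<le> \<sigma> \<and> X i}" by simp
      have XM: "X M" "M \<le> \<sigma>" using Max_in[OF fin] True unfolding M_def by auto
      have Mmax: "i \<le> M" if "i \<le> \<sigma>" "X i" for i using Max_ge[OF fin] that unfolding M_def by auto
      have R: "(\<exists>\<tau>'. \<tau> \<le> \<tau>' + t \<and> \<tau>' < \<tau> \<and> X \<tau>') \<longleftrightarrow> Suc \<sigma> \<le> M + t"
      proof
        assume "\<exists>\<tau>'. \<tau> \<le> \<tau>' + t \<and> \<tau>' < \<tau> \<and> X \<tau>'"
        then obtain \<tau>' where "\<tau> \<le> \<tau>' + t" "\<tau>' < \<tau>" "X \<tau>'" by blast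
        then show "Suc \<sigma> \<le> M + t" using Mmax[of \<tau>'] Suc by auto
      next
        assume "Suc \<sigma> \<le> M + t" then show "\<exists>\<tau>'. \<tau> \<le> \<tau>' + t \<and> \<tau>' < \<tau> \<and> X \<tau>'"
          using XM Suc by (intro exI[of _ M]) auto
      qed
      obtain m where m: "\<sigma> = M + m" using XM(2) le_Suc_ex by blast
      have silent: "\<not> X i" if "M < i" "i \<le> \<sigma>" for i using Mmax[of i] that by auto
      have t4: "4 \<le> t" using t v1 p by simp
      show ?thesis unfolding R unfolding Suc
      proof (cases "m \<le> 1")
        case True
        then have "m = 0 \<or> m = 1" by auto
        then show "F k v0 p X (Suc \<sigma>) NY \<longleftrightarrow> Suc \<sigma> \<le> M + t"
          using XM m t4 by (auto simp: C_Y C_D)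
      next
        case False
        define n where "n = m - 2"
        have rs: "\<not> F k v0 p X (Suc (Suc M)) ND \<and> \<not> F k v0 p X (Suc (Suc M)) NR \<and> F k v0 p X (Suc (Suc M)) NG \<and>
           L1 k v0 p X 0 (Suc (Suc M)) \<and> Off2 k v0 p X (Suc (Suc M))"
          using reset[of X M] XM silent[of "Suc M"] m False by auto
        have sig: "\<sigma> = Suc (Suc M) + n" using m False n_def by auto
        show "F k v0 p X (Suc \<sigma>) NY \<longleftrightarrow> Suc \<sigma> \<le> M + t"
        proof (cases "n = 0")
          case True
          then show ?thesis using rs sig t4 by (auto simp: C_Y)
        next
          case False
          have En: "E k v0 p X n \<sigma>"
            using run[where X=X and s="Suc (Suc M)" and n=n, OF v0] rs silent sig False by auto
          have xs: "\<not> X \<sigma>" using silent sig by auto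
          show ?thesis
          proof (cases "odd n")
            case True
            then have a: "L1 k v0 p X (v0 - n div 2) \<sigma>" "L2 k v0 p X 0 \<sigma>" using En by (auto simp: E_def)
            have "F k v0 p X (Suc \<sigma>) NY \<longleftrightarrow> 1 \<le> v0 - n div 2"
              using En xs B1[OF a(1)] B2[OF a(2)] v0 by (auto simp: C_Y E_def)
            also have "\<dots> \<longleftrightarrow> Suc \<sigma> \<le> M + t" using True sig t p by presburger
            finally show ?thesis .
          next
            case ev: False
            then have a: "L1 k v0 p X 0 \<sigma>" "L2 k v0 p X (v0 - (n div 2 - 1)) \<sigma>" using En by (auto simp: E_def)
            have "F k v0 p X (Suc \<sigma>) NY \<longleftrightarrow> 2^p \<le> v0 - (n div 2 - 1)"
              using En xs B1[OF a(1)] B2[OF a(2)] v0 by (auto simp: C_Y E_def)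
            also have "\<dots> \<longleftrightarrow> Suc \<sigma> \<le> M + t"
            proof (cases "p = 0")
              case True then show ?thesis using ev False sig t by simp presburger
            next
              case False then have "p = 1" using p by simp
              then show ?thesis using ev \<open>n \<noteq> 0\<close> sig t by simp presburger
            qed
            finally show ?thesis .
          qed
        qed
      qed
    qed
  qed
  then show ?thesis by (simp only: outp_F)
qed
  show ?thesis unfolding is_det_timer_def using valid_mk[of k v0 p] h by simp
qed


lemma aux_mk: "aux_count (mk k v0 p) \<le> 5 * k + 6"
proof -
  have c5: "card {NX,NY,ND,NR,NG} \<le> 5" by (simp add: card_insert_if)
  have "card (Names k) \<le> card {NX,NY,ND,NR,NG} + card (NB ` {..<k}) + card (NBN ` {..<k})
      + card (NBT ` {..<k}) + card (NZ ` {..k}) + card (NW ` {..<k})"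
    unfolding Names_def by (rule order_trans[OF card_Un_le] add_mono card_Un_le order_refl)+
  also have "\<dots> \<le> 5 + k + k + k + (k+1) + k"
    using c5 card_image_le[of "{..<k}" NB] card_image_le[of "{..<k}" NBN] card_image_le[of "{..<k}" NBT]
      card_image_le[of "{..k}" NZ] card_image_le[of "{..<k}" NW] by simp
  finally have "card (Names k) \<le> 5 * k + 6" by simp
  moreover have "aux_count (mk k v0 p) \<le> card (Names k)"
    unfolding aux_count_def mk_def
    by (simp, rule order_trans[OF card_mono card_image_le]) (auto simp: finite_Names)
  ultimately show ?thesis by linarith
qed

lemma lower:
  assumes T: "is_det_timer N t" and t1: "1 \<le> t"
  shows "t + 1 \<le> 2 ^ (aux_count N + 1)"
proof -
  define X :: "nat \<Rightarrow> bool" where "X = (\<lambda>n. n = 0)"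
  have V: "valid_net N" using T by (simp add: is_det_timer_def)
  have spec: "fires N X \<tau> (outp N) \<longleftrightarrow> (\<exists>\<tau>'. \<tau> \<le> \<tau>' + t \<and> \<tau>' < \<tau> \<and> X \<tau>')" for \<tau>
    using T by (simp add: is_det_timer_def)
  define S where "S \<tau> = {v \<in> nodes N - {inp N}. fires N X \<tau> v}" for \<tau>
  have inpX: "fires N X \<tau> (inp N) \<longleftrightarrow> \<tau> = 0" for \<tau>
    by (cases \<tau>) (simp_all add: X_def)
  have step: "S (Suc a) = S (Suc b)" if ab: "1 \<le> a" "1 \<le> b" "S a = S b" for a b
  proof -
    have fe: "fires N X a u = fires N X b u" if "u \<in> nodes N" for u
    proof (cases "u = inp N")
      case True then show ?thesis using ab inpX by simp
    next
      case False
      then have "fires N X a u \<longleftrightarrow> u \<in> S a" "fires N X b u \<longleftrightarrow> u \<in> S b" using that by (auto simp: S_def)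
      then show ?thesis using ab by simp
    qed
    have "(\<Sum>u\<in>nodes N. wt N u v * (if fires N X a u then 1 else 0))
        = (\<Sum>u\<in>nodes N. wt N u v * (if fires N X b u then 1 else 0))" for v
      by (rule sum.cong) (use fe in auto)
    then show ?thesis unfolding S_def by simp
  qed
  have shift: "S (a + d) = S (b + d)" if "1 \<le> a" "1 \<le> b" "S a = S b" for a b d
  proof (induction d)
    case 0 then show ?case using that by simp
  next
    case (Suc d) then show ?case using step[of "a+d" "b+d"] that by simp
  qed
  have outS: "outp N \<in> nodes N - {inp N}" using V by (auto simp: valid_net_def)
  have nofire: False if ij: "i < j" "1 \<le> i" "j \<le> t + 1" "S i = S j" for i j
  proof -
    define m where "m = t + 1 - (j - i)"
    have j1: "1 \<le> j" using ij by simp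
    have "S (i + (m - i)) = S (j + (m - i))" by (rule shift[OF ij(2) j1 ij(4)])
    moreover have "i + (m - i) = m" "j + (m - i) = t + 1" using ij by (auto simp: m_def)
    ultimately have Sm: "S m = S (t+1)" by simp
    have "fires N X m (outp N)" using spec[of m] ij by (auto simp: X_def m_def intro!: exI[of _ 0])
    then have "outp N \<in> S m" using outS by (simp add: S_def)
    then have "outp N \<in> S (t+1)" using Sm by simp
    then have "fires N X (t+1) (outp N)" unfolding S_def mem_Collect_eq by blast
    then show False using spec[of "t+1"] by (auto simp: X_def)
  qed
  have inj: "inj_on S {1..t+1}"
  proof (rule inj_onI)
    fix i j assume "i \<in> {1..t+1}" "j \<in> {1..t+1}" "S i = S j"
    then show "i = j" using nofire[of i j] nofire[of j i] by (cases "i < j"; cases "j < i") auto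
  qed
  have fin: "finite (nodes N - {inp N})" using V by (simp add: valid_net_def)
  have "card {1..t+1} \<le> card (Pow (nodes N - {inp N}))"
    by (rule card_inj_on_le[OF inj]) (use fin in \<open>auto simp: S_def\<close>)
  moreover have "card (nodes N - {inp N}) = aux_count N + 1"
  proof -
    have "nodes N - {inp N} = insert (outp N) (nodes N - {inp N, outp N})" using outS by auto
    then show ?thesis unfolding aux_count_def using fin by (simp add: card_insert_if)
  qed
  ultimately show ?thesis using fin by (simp add: card_Pow)
qed


lemma ex_k: assumes "1 \<le> (t::nat)" shows "\<exists>k. t < 2^k \<and> 2^(k-1) \<le> t"
proof -
  define k where "k = (LEAST k. t < 2^k)"
  have ex: "t < 2^t" by simp
  have a: "t < 2^k" unfolding k_def by (rule LeastI[of "\<lambda>k. t < 2^k" t, OF ex])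
  have k1: "k \<noteq> 0" using a assms by (cases k) auto
  have "\<not> t < 2^(k-1)"
    using not_less_Least[of "k-1" "\<lambda>k. t < 2^k"] k1 unfolding k_def[symmetric] by simp
  then show ?thesis using a by (intro exI[of _ k]) auto
qed

theorem theorem1:
  shows "(\<exists>c > 0. \<exists>t0. \<forall>t \<ge> t0. \<exists>N. is_det_timer N t \<and>
            real (aux_count N) \<le> c * log 2 (real t))
       \<and> (\<exists>c > 0. \<exists>t0. \<forall>t \<ge> t0. \<forall>N. is_det_timer N t \<longrightarrow>
            real (aux_count N) \<ge> c * log 2 (real t))"
proof (intro conjI)
  show "\<exists>c > 0. \<exists>t0. \<forall>t \<ge> t0. \<exists>N. is_det_timer N t \<and> real (aux_count N) \<le> c * log 2 (real t)"
  proof (intro exI[of _ "11::real"] conjI exI[of _ "4::nat"] allI impI)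
    fix t :: nat assume t4: "4 \<le> t"
    obtain k where k: "t < 2^k" "2^(k-1) \<le> t" using ex_k[of t] t4 by auto
    define v0 where "v0 = (t - 2) div 2"
    define p :: nat where "p = (if even t then 1 else 0)"
    have v1: "1 \<le> v0" using t4 by (simp add: v0_def)
    have v0k: "v0 < 2^k" using k t4 by (simp add: v0_def)
    have p1: "p \<le> 1" by (simp add: p_def)
    have tt: "t = 2 * v0 + 3 - p" using t4 unfolding v0_def p_def by presburger
    have T: "is_det_timer (mk k v0 p) t" by (rule timer_ok[OF v1 v0k p1 tt])
    have L1: "real (k - 1) \<le> log 2 (real t)" using le_log2_of_power[OF k(2)] .
    have L2: "2 \<le> log 2 (real t)" using le_log2_of_power[of 2 t] t4 by simp
    have "real (aux_count (mk k v0 p)) \<le> real (5 * k + 6)" using aux_mk[of k v0 p] by linarith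
    also have "\<dots> = 5 * real k + 6" by simp
    also have "\<dots> \<le> 11 * log 2 (real t)"
    proof -
      have "k \<noteq> 0" using k t4 by (cases k) auto
      then have "real (k - 1) = real k - 1" by (simp add: of_nat_diff)
      then show ?thesis using L1 L2 by linarith
    qed
    finally show "\<exists>N. is_det_timer N t \<and> real (aux_count N) \<le> 11 * log 2 (real t)"
      using T by blast
  qed simp
next
  show "\<exists>c > 0. \<exists>t0. \<forall>t \<ge> t0. \<forall>N. is_det_timer N t \<longrightarrow> real (aux_count N) \<ge> c * log 2 (real t)"
  proof (intro exI[of _ "1/2::real"] conjI exI[of _ "4::nat"] allI impI)
    fix t :: nat and N assume t4: "4 \<le> t" and T: "is_det_timer N t"
    have "t + 1 \<le> 2 ^ (aux_count N + 1)" using lower[OF T] t4 by simp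
    then have "t < 2 ^ (aux_count N + 1)" by simp
    moreover have "0 < t" using t4 by simp
    ultimately have a: "log 2 (real t) < real (aux_count N + 1)" by (rule log2_of_power_less)
    have L2: "2 \<le> log 2 (real t)" using le_log2_of_power[of 2 t] t4 by simp
    show "real (aux_count N) \<ge> 1/2 * log 2 (real t)" using a L2 by simp
  qed simp
qed

end
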